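(* Let $k\ge1$ and let $\zeta_1,\dots,\zeta_k>0$, $\alpha_1,\dots,\alpha_k>0$ be real. Let $x_1,\dots,x_k$ be mutually independent, $x_j$ having the type-1 beta density $$f_j(x_j)=\frac{\Gamma(\zeta_j+\alpha_j)}{\Gamma(\zeta_j)\Gamma(\alpha_j)}x_j^{\zeta_j-1}(1-x_j)^{\alpha_j-1},\quad 0<x_j<1,$$ and $0$ elsewhere. Let $(v_1,\dots,v_k)$ be a vector of positive real random variables with an arbitrary joint density $f(v_1,\dots,v_k)$ on $(0,\infty)^k$, independent of $(x_1,\dots,x_k)$. Put $u_j=v_j/x_j$, $j=1,\dots,k$, and let $g(u_1,\dots,u_k)$ be the joint density of $(u_1,\dots,u_k)$. Then, for (almost every) $(u_1,\dots,u_k)\in(0,\infty)^k$, $$\Big\{\prod_{j=1}^k\frac{\Gamma(\zeta_j)}{\Gamma(\zeta_j+\alpha_j)}\Big\}g(u_1,\dots,u_k)=I_{u_j,j=1,\dots,k}^{(\zeta_j,\alpha_j),j=1,\dots,k}f(u_1,\dots,u_k).$$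
   Context: The multivariable Kober fractional integral operator of the first kind is defined by $$I_{u_j,j=1,\dots,k}^{(\zeta_j,\alpha_j),j=1,\dots,k}f(u_1,\dots,u_k)=\Big\{\prod_{j=1}^k\frac{u_j^{-\zeta_j-\alpha_j}}{\Gamma(\alpha_j)}\Big\}\int_{0}^{u_1}\cdots\int_{0}^{u_k}\Big\{\prod_{j=1}^k(u_j-v_j)^{\alpha_j-1}v_j^{\zeta_j}\Big\}f(v_1,\dots,v_k)\,dv_1\cdots dv_k.$$ *)

theory Defs
  imports "HOL-Probability.Probability"
begin

text \<open>Points of R^k are represented as extensional functions on the index set {..<k}
  (elements of PiE {..<k} (\<lambda>_. UNIV)), with Lebesgue measure given by the product
  measure PiM {..<k} (\<lambda>_. lborel).\<close>

abbreviation lborelk :: "nat \<Rightarrow> (nat \<Rightarrow> real) measure" where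
  "lborelk k \<equiv> PiM {..<k} (\<lambda>_. lborel)"

definition beta1_density :: "real \<Rightarrow> real \<Rightarrow> real \<Rightarrow> real" where
  "beta1_density \<zeta> \<alpha> x =
     (if 0 < x \<and> x < 1
      then Gamma (\<zeta> + \<alpha>) / (Gamma \<zeta> * Gamma \<alpha>) * x powr (\<zeta> - 1) * (1 - x) powr (\<alpha> - 1)
      else 0)"

definition kober :: "nat \<Rightarrow> (nat \<Rightarrow> real) \<Rightarrow> (nat \<Rightarrow> real) \<Rightarrow> ((nat \<Rightarrow> real) \<Rightarrow> real)
                      \<Rightarrow> (nat \<Rightarrow> real) \<Rightarrow> real" where
  "kober k \<zeta> \<alpha> f u =
     (\<Prod>j<k. u j powr (- \<zeta> j - \<alpha> j) / Gamma (\<alpha> j)) *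
     (LINT v : (PiE {..<k} (\<lambda>j. {0..u j})) | lborelk k.
        (\<Prod>j<k. (u j - v j) powr (\<alpha> j - 1) * v j powr (\<zeta> j)) * f v)"

end

theory Submission
  imports Defs
begin


definition Kf :: "real \<Rightarrow> real \<Rightarrow> real \<Rightarrow> real \<Rightarrow> real" where
  "Kf \<zeta> \<alpha> c u = (if c < u then Gamma (\<zeta> + \<alpha>) / (Gamma \<zeta> * Gamma \<alpha>) *
      c powr \<zeta> * u powr (- \<zeta> - \<alpha>) * (u - c) powr (\<alpha> - 1) else 0)"

lemma beta1_nonneg: "\<zeta> > 0 \<Longrightarrow> \<alpha> > 0 \<Longrightarrow> beta1_density \<zeta> \<alpha> x \<ge> 0"
  unfolding beta1_density_def by (auto intro!: mult_nonneg_nonneg divide_nonneg_nonneg Gamma_real_nonneg)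

lemma Kf_nonneg: "\<zeta> > 0 \<Longrightarrow> \<alpha> > 0 \<Longrightarrow> Kf \<zeta> \<alpha> c u \<ge> 0"
  unfolding Kf_def by (auto intro!: mult_nonneg_nonneg divide_nonneg_nonneg Gamma_real_nonneg)

lemma beta1_meas[measurable]: "(\<lambda>x. beta1_density z a x) \<in> borel_measurable borel"
  unfolding beta1_density_def by measurable

lemma Kf_meas[measurable]: "(\<lambda>u. Kf z a c u) \<in> borel_measurable borel"
  unfolding Kf_def by measurable

lemma Kf_pt:
  assumes "c > 0" "c \<le> u"
  shows "beta1_density z a (c / u) * (c / u\<^sup>2) = Kf z a c u"
proof (cases "u = c")
  case True then show ?thesis using assms by (simp add: beta1_density_def Kf_def)
next
  case False
  then have u: "u > c" using assms by auto
  then have up: "u > 0" using assms by auto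
  have lt: "c / u < 1" using u up by simp
  have "1 - c / u = (u - c) / u" using up by (simp add: field_simps)
  then have "(1 - c/u) powr (a - 1) = (u - c) powr (a - 1) / u powr (a - 1)"
    using u up by (simp add: powr_divide)
  moreover have "(c / u) powr (z - 1) = c powr (z - 1) / u powr (z - 1)"
    using assms up by (simp add: powr_divide)
  moreover have "c powr (z - 1) * c = c powr z" using assms by (simp add: powr_diff)
  moreover have "u powr (- z - a) = 1 / (u powr (z - 1) * u powr (a - 1) * u\<^sup>2)"
  proof -
    have "u powr (z - 1) * u powr (a - 1) * u powr 2 = u powr ((z - 1) + (a - 1) + 2)"
      by (simp only: powr_add)
    also have "(z - 1) + (a - 1) + 2 = z + a" by simp
    finally have "u powr (z - 1) * u powr (a - 1) * u\<^sup>2 = u powr (z + a)"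
      using up by (simp add: powr_numeral)
    moreover have "u powr (- z - a) = inverse (u powr (z + a))"
      using powr_minus[of u "z + a"] by (simp add: minus_add)
    ultimately show ?thesis by (simp add: divide_inverse)
  qed
  ultimately have e: "beta1_density z a (c / u) * (c / u\<^sup>2) =
     Gamma (z + a) / (Gamma z * Gamma a) * ((c powr (z - 1)) / (u powr (z - 1))) *
       ((u - c) powr (a - 1) / u powr (a - 1)) * (c / u\<^sup>2)"
    and e2: "Kf z a c u = Gamma (z + a) / (Gamma z * Gamma a) * (c powr (z - 1) * c) *
       (1 / (u powr (z - 1) * u powr (a - 1) * u\<^sup>2)) * (u - c) powr (a - 1)"
    using u up lt assms unfolding beta1_density_def Kf_def by auto
  have nz: "u powr (z - 1) \<noteq> 0" "u powr (a - 1) \<noteq> 0" "u \<noteq> 0" using up by auto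
  show ?thesis unfolding e e2
    using nz by (simp add: divide_simps)
qed

lemma distr_inv_beta:
  assumes c: "c > 0" and z: "z > 0" and a: "a > 0"
  shows "distr (density lborel (\<lambda>x. ennreal (beta1_density z a x))) lborel (\<lambda>t. c / t)
       = density lborel (\<lambda>u. ennreal (Kf z a c u))"
proof (rule measure_eqI)
  show "sets (distr (density lborel (\<lambda>x. ennreal (beta1_density z a x))) lborel (\<lambda>t. c / t))
      = sets (density lborel (\<lambda>u. ennreal (Kf z a c u)))" by simp
  fix S assume "S \<in> sets (distr (density lborel (\<lambda>x. ennreal (beta1_density z a x))) lborel (\<lambda>t. c / t))"
  then have S[measurable]: "S \<in> sets borel" by simp
  define F where "F t = beta1_density z a t * indicator S (c / t)" for t
  define G where "G u = Kf z a c u * indicator S u" for u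
  have Fm[measurable]: "F \<in> borel_measurable borel" unfolding F_def by measurable
  have Gm[measurable]: "G \<in> borel_measurable borel" unfolding G_def by measurable
  have Fnn: "F t \<ge> 0" for t unfolding F_def using beta1_nonneg[OF z a] by auto
  have Gnn: "G t \<ge> 0" for t unfolding G_def using Kf_nonneg[OF z a] by auto
  have lhs: "emeasure (distr (density lborel (\<lambda>x. ennreal (beta1_density z a x))) lborel (\<lambda>t. c / t)) S
      = (\<integral>\<^sup>+ t. ennreal (F t) \<partial>lborel)"
  proof -
    have Sm: "(\<lambda>t. c / t) -` S \<in> sets lborel"
      using measurable_sets[of "\<lambda>t. c / t" borel borel S] by auto
    show ?thesis
      by (subst emeasure_distr) (auto simp: emeasure_density[OF _ Sm] F_def intro!: nn_integral_cong split: split_indicator)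
  qed
  have rhs: "emeasure (density lborel (\<lambda>u. ennreal (Kf z a c u))) S = (\<integral>\<^sup>+ u. ennreal (G u) \<partial>lborel)"
    by (auto simp: emeasure_density G_def intro!: nn_integral_cong split: split_indicator)
  have step: "(\<integral>\<^sup>+ t. ennreal (F t) * indicator {1 / real (Suc n)..1} t \<partial>lborel)
     = (\<integral>\<^sup>+ u. ennreal (G u) * indicator {c..c * real (Suc n)} u \<partial>lborel)" for n
  proof -
    define g where "g x = - c / x" for x :: real
    define g' where "g' x = c / x\<^sup>2" for x :: real
    have ga: "g (- c * real (Suc n)) = 1 / real (Suc n)" using c by (simp add: g_def)
    have gb: "g (- c) = 1" using c by (simp add: g_def)
    have "(\<integral>\<^sup>+ t. F t * indicator {g (- c * real (Suc n))..g (- c)} t \<partial>lborel)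
        = (\<integral>\<^sup>+ x. F (g x) * g' x * indicator {- c * real (Suc n)..- c} x \<partial>lborel)"
    proof (rule nn_integral_substitution)
      show "set_borel_measurable borel {g (- c * real (Suc n))..g (- c)} F"
        unfolding set_borel_measurable_def by measurable
      show "(g has_real_derivative g' x) (at x)" if "x \<in> {- c * real (Suc n)..- c}" for x
        using that c unfolding g_def g'_def
        by (auto intro!: derivative_eq_intros simp: power2_eq_square field_simps)
      show "continuous_on {- c * real (Suc n)..- c} g'"
        using c unfolding g'_def by (auto intro!: continuous_intros)
      show "0 \<le> g' x" for x using c unfolding g'_def by auto
      show "- c * real (Suc n) \<le> - c" using c by simp
    qed
    also have "\<dots> = (\<integral>\<^sup>+ x. ennreal (F (g x) * g' x * indicator {- c * real (Suc n)..- c} x)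
                   \<partial>distr lborel borel uminus)"
      by (simp add: lborel_distr_uminus)
    also have "\<dots> = (\<integral>\<^sup>+ u. ennreal (F (g (- u)) * g' (- u) * indicator {- c * real (Suc n)..- c} (- u)) \<partial>lborel)"
      by (subst nn_integral_distr) (auto simp: g_def g'_def)
    also have "\<dots> = (\<integral>\<^sup>+ u. ennreal (G u) * indicator {c..c * real (Suc n)} u \<partial>lborel)"
    proof (rule nn_integral_cong)
      fix u :: real
      show "ennreal (F (g (- u)) * g' (- u) * indicator {- c * real (Suc n)..- c} (- u))
          = ennreal (G u) * indicator {c..c * real (Suc n)} u"
      proof (cases "c \<le> u \<and> u \<le> c * real (Suc n)")
        case True
        then have "F (g (- u)) * g' (- u) = G u"
          using Kf_pt[OF c, of u z a] c unfolding F_def G_def g_def g'_def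
          by (auto simp: field_simps)
        then show ?thesis using True by (auto split: split_indicator)
      qed (auto split: split_indicator)
    qed
    finally have X: "(\<integral>\<^sup>+ t. ennreal (F t * indicator {1 / real (Suc n)..1} t) \<partial>lborel)
       = (\<integral>\<^sup>+ u. ennreal (G u) * indicator {c..c * real (Suc n)} u \<partial>lborel)" unfolding ga gb .
    have "(\<integral>\<^sup>+ t. ennreal (F t * indicator {1 / real (Suc n)..1} t) \<partial>lborel)
       = (\<integral>\<^sup>+ t. ennreal (F t) * indicator {1 / real (Suc n)..1} t \<partial>lborel)"
      by (intro nn_integral_cong) (auto split: split_indicator)
    with X show ?thesis by simp
  qed
  define A where "A n = {1 / real (Suc n)..1}" for n
  define B where "B n = {c..c * real (Suc n)}" for n
  have incA: "incseq A" unfolding A_def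
    by (intro monoI) (auto simp: frac_le)
  have incB: "incseq B" unfolding B_def
    using c by (intro monoI) auto
  have UA: "(\<Union>n. A n) = {0<..1}"
  proof (intro equalityI subsetI)
    fix x :: real assume "x \<in> {0<..1}"
    then have x: "0 < x" "x \<le> 1" by auto
    obtain n :: nat where "1 / x < real n" using reals_Archimedean2 by blast
    then have "1 / real (Suc n) \<le> x" using x by (auto simp: field_simps)
    then show "x \<in> (\<Union>n. A n)" using x by (auto simp: A_def)
  next
    fix x assume "x \<in> (\<Union>n. A n)"
    then obtain n where "x \<in> A n" by auto
    moreover have "0 < 1 / real (Suc n)" by simp
    ultimately show "x \<in> {0<..1}" unfolding A_def
      by (auto intro: less_le_trans[of 0 "1 / real (Suc n)" x])
  qed
  have UB: "(\<Union>n. B n) = {c..}"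
  proof (intro equalityI subsetI)
    fix x :: real assume "x \<in> {c..}"
    then have x: "c \<le> x" by auto
    obtain n :: nat where "x / c < real n" using reals_Archimedean2 by blast
    then have "x \<le> c * real (Suc n)" using c by (auto simp: field_simps)
    then show "x \<in> (\<Union>n. B n)" using x by (auto simp: B_def)
  qed (auto simp: B_def)
  have "(SUP n. emeasure (density lborel F) (A n)) = emeasure (density lborel F) (\<Union>n. A n)"
    by (rule SUP_emeasure_incseq[OF _ incA]) (auto simp: A_def)
  moreover have "(SUP n. emeasure (density lborel G) (B n)) = emeasure (density lborel G) (\<Union>n. B n)"
    by (rule SUP_emeasure_incseq[OF _ incB]) (auto simp: B_def)
  moreover have "emeasure (density lborel F) (A n) = emeasure (density lborel G) (B n)" for n
    using step[of n] by (simp add: emeasure_density A_def B_def)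
  ultimately have "emeasure (density lborel F) {0<..1} = emeasure (density lborel G) {c..}"
    unfolding UA UB by simp
  moreover have "emeasure (density lborel F) {0<..1} = (\<integral>\<^sup>+ t. ennreal (F t) \<partial>lborel)"
    by (auto simp: emeasure_density F_def beta1_density_def intro!: nn_integral_cong split: split_indicator)
  moreover have "emeasure (density lborel G) {c..} = (\<integral>\<^sup>+ t. ennreal (G t) \<partial>lborel)"
    by (auto simp: emeasure_density G_def Kf_def intro!: nn_integral_cong split: split_indicator)
  ultimately show "emeasure (distr (density lborel (\<lambda>x. ennreal (beta1_density z a x))) lborel (\<lambda>t. c / t)) S
      = emeasure (density lborel (\<lambda>u. ennreal (Kf z a c u))) S"
    unfolding lhs rhs by simp
qed



lemma indicator_PiE_prod:
  assumes "finite I" "x \<in> extensional I"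
  shows "(indicator (PiE I A) x :: ennreal) = (\<Prod>i\<in>I. indicator (A i) (x i))"
proof (cases "x \<in> PiE I A")
  case True then show ?thesis by (auto simp: PiE_iff)
next
  case False
  then obtain i where "i \<in> I" "x i \<notin> A i" using assms(2) by (auto simp: PiE_iff)
  then have "(\<Prod>i\<in>I. (indicator (A i) (x i) :: ennreal)) = 0"
    using assms(1) by (intro prod_zero bexI[of _ i]) auto
  then show ?thesis using False by simp
qed

lemma PiM_density_prod:
  fixes h :: "nat \<Rightarrow> real \<Rightarrow> real"
  assumes I: "finite I" and hm[measurable]: "\<And>i. h i \<in> borel_measurable borel"
  shows "density (PiM I (\<lambda>_. lborel)) (\<lambda>x. \<Prod>i\<in>I. ennreal (h i (x i)))
       = PiM I (\<lambda>i. density lborel (\<lambda>t. ennreal (h i t)))"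
proof -
  have sf: "sigma_finite_measure (density lborel (\<lambda>t. ennreal (h i t)))" for i
  proof -
    have m: "(\<lambda>t. ennreal (h i t)) \<in> borel_measurable lborel" by measurable
    show ?thesis using sigma_finite_measure.sigma_finite_iff_density_finite[OF sigma_finite_lborel m] by simp
  qed
  have N: "product_sigma_finite (\<lambda>i. density lborel (\<lambda>t. ennreal (h i t)))"
    by (rule product_sigma_finite.intro) (rule sf)
  have L: "product_sigma_finite (\<lambda>_. lborel :: real measure)"
    by (rule product_sigma_finite.intro) (rule sigma_finite_lborel)
  show ?thesis
  proof (rule product_sigma_finite.PiM_eqI[OF N I])
    show "sets (density (Pi\<^sub>M I (\<lambda>_. lborel)) (\<lambda>x. \<Prod>i\<in>I. ennreal (h i (x i))))
        = sets (Pi\<^sub>M I (\<lambda>i. density lborel (\<lambda>t. ennreal (h i t))))"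
      by (simp only: sets_density) (rule sets_PiM_cong; simp)
    fix A assume A: "\<And>i. i \<in> I \<Longrightarrow> A i \<in> sets (density lborel (\<lambda>t. ennreal (h i t)))"
    then have A'[measurable]: "\<And>i. i \<in> I \<Longrightarrow> A i \<in> sets borel" by simp
    have PA: "PiE I A \<in> sets (Pi\<^sub>M I (\<lambda>_. lborel))"
      using A' by (intro sets_PiM_I_finite I) auto
    have "emeasure (density (Pi\<^sub>M I (\<lambda>_. lborel)) (\<lambda>x. \<Prod>i\<in>I. ennreal (h i (x i)))) (PiE I A)
        = (\<integral>\<^sup>+ x. (\<Prod>i\<in>I. ennreal (h i (x i))) * indicator (PiE I A) x \<partial>Pi\<^sub>M I (\<lambda>_. lborel))"
      by (rule emeasure_density[OF _ PA]) measurable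
    also have "\<dots> = (\<integral>\<^sup>+ x. (\<Prod>i\<in>I. ennreal (h i (x i)) * indicator (A i) (x i)) \<partial>Pi\<^sub>M I (\<lambda>_. lborel))"
      by (intro nn_integral_cong)
         (simp add: indicator_PiE_prod[OF I] space_PiM PiE_iff prod.distrib)
    also have "\<dots> = (\<Prod>i\<in>I. \<integral>\<^sup>+ t. ennreal (h i t) * indicator (A i) t \<partial>lborel)"
      by (rule product_sigma_finite.product_nn_integral_prod[OF L I]) auto
    also have "\<dots> = (\<Prod>i\<in>I. emeasure (density lborel (\<lambda>t. ennreal (h i t))) (A i))"
      using A' by (intro prod.cong refl) (simp add: emeasure_density)
    finally show "emeasure (density (Pi\<^sub>M I (\<lambda>_. lborel)) (\<lambda>x. \<Prod>i\<in>I. ennreal (h i (x i)))) (PiE I A)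
        = (\<Prod>i\<in>I. emeasure (density lborel (\<lambda>t. ennreal (h i t))) (A i))" .
  qed
qed

lemma sf_density_real: "sigma_finite_measure (density lborel (\<lambda>t. ennreal (h t)))"
  if [measurable]: "h \<in> borel_measurable borel" for h :: "real \<Rightarrow> real"
proof -
  have m: "(\<lambda>t. ennreal (h t)) \<in> borel_measurable lborel" by measurable
  show ?thesis using sigma_finite_measure.sigma_finite_iff_density_finite[OF sigma_finite_lborel m] by simp
qed

lemma distr_PiM_coord:
  fixes b \<kappa> \<phi> :: "nat \<Rightarrow> real \<Rightarrow> real"
  assumes I: "finite I"
    and bm[measurable]: "\<And>i. b i \<in> borel_measurable borel"
    and km[measurable]: "\<And>i. \<kappa> i \<in> borel_measurable borel"
    and pm[measurable]: "\<And>i. \<phi> i \<in> borel_measurable borel"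
    and eq: "\<And>i. i \<in> I \<Longrightarrow> distr (density lborel (\<lambda>t. ennreal (b i t))) lborel (\<phi> i)
                 = density lborel (\<lambda>t. ennreal (\<kappa> i t))"
  shows "distr (PiM I (\<lambda>i. density lborel (\<lambda>t. ennreal (b i t)))) (PiM I (\<lambda>_. lborel))
           (\<lambda>x. \<lambda>i\<in>I. \<phi> i (x i))
       = PiM I (\<lambda>i. density lborel (\<lambda>t. ennreal (\<kappa> i t)))"
proof -
  have N: "product_sigma_finite (\<lambda>i. density lborel (\<lambda>t. ennreal (\<kappa> i t)))"
    by (rule product_sigma_finite.intro) (rule sf_density_real, simp)
  have B: "product_sigma_finite (\<lambda>i. density lborel (\<lambda>t. ennreal (b i t)))"
    by (rule product_sigma_finite.intro) (rule sf_density_real, simp)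
  have sB: "sets (PiM I (\<lambda>i. density lborel (\<lambda>t. ennreal (b i t)))) = sets (PiM I (\<lambda>_. lborel))"
    by (rule sets_PiM_cong; simp)
  have mphi: "(\<lambda>x. \<lambda>i\<in>I. \<phi> i (x i)) \<in> measurable (PiM I (\<lambda>i. density lborel (\<lambda>t. ennreal (b i t)))) (PiM I (\<lambda>_. lborel))"
    unfolding measurable_cong_sets[OF sB refl] by measurable
  show ?thesis
  proof (rule product_sigma_finite.PiM_eqI[OF N I])
    show "sets (distr (PiM I (\<lambda>i. density lborel (\<lambda>t. ennreal (b i t)))) (PiM I (\<lambda>_. lborel))
           (\<lambda>x. \<lambda>i\<in>I. \<phi> i (x i))) = sets (PiM I (\<lambda>i. density lborel (\<lambda>t. ennreal (\<kappa> i t))))"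
      by (simp only: sets_distr) (rule sets_PiM_cong; simp)
    fix A assume A: "\<And>i. i \<in> I \<Longrightarrow> A i \<in> sets (density lborel (\<lambda>t. ennreal (\<kappa> i t)))"
    then have A'[measurable]: "\<And>i. i \<in> I \<Longrightarrow> A i \<in> sets borel" by simp
    have PA: "PiE I A \<in> sets (Pi\<^sub>M I (\<lambda>_. lborel))"
      using A' by (intro sets_PiM_I_finite I) auto
    have pre: "(\<lambda>x. \<lambda>i\<in>I. \<phi> i (x i)) -` PiE I A \<inter> space (PiM I (\<lambda>i. density lborel (\<lambda>t. ennreal (b i t))))
        = PiE I (\<lambda>i. \<phi> i -` A i)"
      by (auto simp: space_PiM PiE_iff)
    have "emeasure (distr (PiM I (\<lambda>i. density lborel (\<lambda>t. ennreal (b i t)))) (PiM I (\<lambda>_. lborel))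
           (\<lambda>x. \<lambda>i\<in>I. \<phi> i (x i))) (PiE I A)
        = emeasure (PiM I (\<lambda>i. density lborel (\<lambda>t. ennreal (b i t)))) (PiE I (\<lambda>i. \<phi> i -` A i))"
      by (subst emeasure_distr[OF mphi PA]) (simp only: pre)
    also have "\<dots> = (\<Prod>i\<in>I. emeasure (density lborel (\<lambda>t. ennreal (b i t))) (\<phi> i -` A i))"
    proof (rule product_sigma_finite.emeasure_PiM[OF B I])
      fix i assume i: "i \<in> I"
      show "\<phi> i -` A i \<in> sets (density lborel (\<lambda>t. ennreal (b i t)))"
        using measurable_sets[OF pm A'[OF i]] by simp
    qed
    also have "\<dots> = (\<Prod>i\<in>I. emeasure (density lborel (\<lambda>t. ennreal (\<kappa> i t))) (A i))"
    proof (rule prod.cong[OF refl])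
      fix i assume i: "i \<in> I"
      have "emeasure (density lborel (\<lambda>t. ennreal (\<kappa> i t))) (A i)
          = emeasure (distr (density lborel (\<lambda>t. ennreal (b i t))) lborel (\<phi> i)) (A i)"
        using eq[OF i] by simp
      also have "\<dots> = emeasure (density lborel (\<lambda>t. ennreal (b i t))) (\<phi> i -` A i)"
        using A'[OF i] by (subst emeasure_distr) auto
      finally show "emeasure (density lborel (\<lambda>t. ennreal (b i t))) (\<phi> i -` A i)
          = emeasure (density lborel (\<lambda>t. ennreal (\<kappa> i t))) (A i)" by simp
    qed
    finally show "emeasure (distr (PiM I (\<lambda>i. density lborel (\<lambda>t. ennreal (b i t)))) (PiM I (\<lambda>_. lborel))
           (\<lambda>x. \<lambda>i\<in>I. \<phi> i (x i))) (PiE I A)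
        = (\<Prod>i\<in>I. emeasure (density lborel (\<lambda>t. ennreal (\<kappa> i t))) (A i))" .
  qed
qed



lemma Kf_meas2[measurable (raw)]:
  assumes [measurable]: "f \<in> borel_measurable M" "g \<in> borel_measurable M"
  shows "(\<lambda>x. Kf z a (f x) (g x)) \<in> borel_measurable M"
  unfolding Kf_def by measurable

lemma Kprod_eq:
  fixes I :: "nat set" and u v \<zeta> \<alpha> :: "nat \<Rightarrow> real" and fv :: real
  assumes I: "finite I" and v: "v \<in> extensional I"
    and upos: "\<And>j. j \<in> I \<Longrightarrow> u j > 0"
    and f0: "(\<exists>j\<in>I. v j \<le> 0) \<Longrightarrow> fv = 0"
  shows "fv * (\<Prod>j\<in>I. Kf (\<zeta> j) (\<alpha> j) (v j) (u j))
    = (\<Prod>j\<in>I. Gamma (\<zeta> j + \<alpha> j) / (Gamma (\<zeta> j) * Gamma (\<alpha> j)) * u j powr (- \<zeta> j - \<alpha> j))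
      * (indicator (PiE I (\<lambda>j. {0..u j})) v * ((\<Prod>j\<in>I. (u j - v j) powr (\<alpha> j - 1) * v j powr \<zeta> j) * fv))"
proof (cases "\<exists>j\<in>I. v j \<le> 0")
  case True then show ?thesis using f0 by simp
next
  case False
  then have vpos: "\<And>j. j \<in> I \<Longrightarrow> v j > 0" by auto
  show ?thesis
  proof (cases "\<forall>j\<in>I. v j < u j")
    case True
    then have inP: "v \<in> PiE I (\<lambda>j. {0..u j})" using v vpos by (auto simp: PiE_iff less_imp_le)
    have "(\<Prod>j\<in>I. Kf (\<zeta> j) (\<alpha> j) (v j) (u j))
        = (\<Prod>j\<in>I. (Gamma (\<zeta> j + \<alpha> j) / (Gamma (\<zeta> j) * Gamma (\<alpha> j)) * u j powr (- \<zeta> j - \<alpha> j))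
            * ((u j - v j) powr (\<alpha> j - 1) * v j powr \<zeta> j))"
      using True by (intro prod.cong refl) (simp add: Kf_def)
    also have "\<dots> = (\<Prod>j\<in>I. Gamma (\<zeta> j + \<alpha> j) / (Gamma (\<zeta> j) * Gamma (\<alpha> j)) * u j powr (- \<zeta> j - \<alpha> j))
        * (\<Prod>j\<in>I. (u j - v j) powr (\<alpha> j - 1) * v j powr \<zeta> j)"
      by (rule prod.distrib)
    finally show ?thesis using inP by simp
  next
    case False
    then obtain j where j: "j \<in> I" "u j \<le> v j" by (auto simp: not_less)
    have K0: "(\<Prod>j\<in>I. Kf (\<zeta> j) (\<alpha> j) (v j) (u j)) = 0"
      using j I by (intro prod_zero bexI[of _ j]) (auto simp: Kf_def)
    show ?thesis
    proof (cases "v j = u j")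
      case True
      have "(\<Prod>j\<in>I. (u j - v j) powr (\<alpha> j - 1) * v j powr \<zeta> j) = 0"
        using j I True by (intro prod_zero bexI[of _ j]) auto
      then show ?thesis using K0 by simp
    next
      case False
      then have "u j < v j" using j by auto
      then have "v \<notin> PiE I (\<lambda>j. {0..u j})" using j(1) by (meson PiE_E atLeastAtMost_iff not_le)
      then show ?thesis using K0 by simp
    qed
  qed
qed

theorem theorem2p1:
  fixes M :: "'a measure" and k :: nat
    and \<zeta> \<alpha> :: "nat \<Rightarrow> real"
    and X :: "nat \<Rightarrow> 'a \<Rightarrow> real"
    and V :: "'a \<Rightarrow> (nat \<Rightarrow> real)"
    and f g :: "(nat \<Rightarrow> real) \<Rightarrow> real"
  assumes "prob_space M"
    and "k \<ge> 1"
    and "\<And>j. j < k \<Longrightarrow> \<zeta> j > 0"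
    and "\<And>j. j < k \<Longrightarrow> \<alpha> j > 0"
    and "\<And>j. j < k \<Longrightarrow>
           distributed M lborel (X j) (\<lambda>x. ennreal (beta1_density (\<zeta> j) (\<alpha> j) x))"
    and "prob_space.indep_vars M (\<lambda>_. lborel) X {..<k}"
    and "\<And>v. f v \<ge> 0"
    and "\<And>v. v \<in> space (lborelk k) \<Longrightarrow> (\<exists>j<k. v j \<le> 0) \<Longrightarrow> f v = 0"
    and "distributed M (lborelk k) V (\<lambda>v. ennreal (f v))"
    and "prob_space.indep_var M
           (lborelk k) (\<lambda>\<omega>. restrict (\<lambda>j. X j \<omega>) {..<k}) (lborelk k) V"
    and "\<And>u. g u \<ge> 0"
    and "distributed M (lborelk k) (\<lambda>\<omega>. restrict (\<lambda>j. V \<omega> j / X j \<omega>) {..<k})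
           (\<lambda>u. ennreal (g u))"
  shows "AE u in lborelk k. (\<forall>j<k. u j > 0) \<longrightarrow>
           (\<Prod>j<k. Gamma (\<zeta> j) / Gamma (\<zeta> j + \<alpha> j)) * g u = kober k \<zeta> \<alpha> f u"
proof -
  interpret prob_space M by fact
  note zpos = assms(3) and apos = assms(4) and Xd = assms(5) and indX = assms(6)
  note fnn = assms(7) and f0 = assms(8) and Vd = assms(9) and indXV = assms(10)
  note gnn = assms(11) and Ud = assms(12)
  define I where "I = {..<k}"
  have "0 \<in> I" using assms(2) by (auto simp: I_def)
  then have I: "finite I" "I \<noteq> {}" by (auto simp: I_def)
  define Xv where "Xv \<omega> = restrict (\<lambda>j. X j \<omega>) I" for \<omega>
  define U where "U \<omega> = restrict (\<lambda>j. V \<omega> j / X j \<omega>) I" for \<omega>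
  define b where "b j t = beta1_density (\<zeta> j) (\<alpha> j) t" for j t
  define Bm where "Bm j = density lborel (\<lambda>t. ennreal (b j t))" for j
  define \<Phi> where "\<Phi> p = (\<lambda>j\<in>I. snd p j / fst p j)" for p :: "(nat \<Rightarrow> real) \<times> (nat \<Rightarrow> real)"
  have Xm[measurable]: "X j \<in> measurable M lborel" if "j \<in> I" for j
    using distributed_measurable[OF Xd] that by (auto simp: I_def)
  have Xmb: "X j \<in> measurable M borel" if "j \<in> I" for j
    using Xm[OF that] by simp
  have XB: "distr M lborel (X j) = Bm j" if "j \<in> I" for j
    using distributed_distr_eq_density[OF Xd] that by (auto simp: I_def Bm_def b_def)
  have Vm[measurable]: "V \<in> measurable M (lborelk k)" using distributed_measurable[OF Vd] .
  have fm: "(\<lambda>v. ennreal (f v)) \<in> borel_measurable (lborelk k)" using distributed_borel_measurable[OF Vd] .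
  then have fm'[measurable]: "f \<in> borel_measurable (lborelk k)" using fnn by simp
  have gm: "(\<lambda>v. ennreal (g v)) \<in> borel_measurable (lborelk k)" using distributed_borel_measurable[OF Ud] .
  then have gm'[measurable]: "g \<in> borel_measurable (lborelk k)" using gnn by simp
  have Xvm[measurable]: "Xv \<in> measurable M (lborelk k)"
  proof -
    have "(\<lambda>\<omega>. \<lambda>j\<in>I. X j \<omega>) \<in> measurable M (PiM I (\<lambda>_. lborel))"
      by (rule measurable_restrict) (rule Xm)
    then show ?thesis unfolding Xv_def I_def .
  qed
  have P: "distr M (lborelk k) Xv = PiM I Bm"
  proof -
    have "distr M (PiM I (\<lambda>_. lborel)) (\<lambda>x. \<lambda>i\<in>I. X i x) = PiM I (\<lambda>i. distr M lborel (X i))"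
    proof -
      have "indep_vars (\<lambda>_. lborel) X I" using indX by (simp add: I_def)
      then show ?thesis
        using indep_vars_iff_distr_eq_PiM'[where I=I and X=X and M'="\<lambda>_. lborel", OF I(2) Xm] by simp
    qed
    also have "\<dots> = PiM I Bm" by (intro PiM_cong) (auto simp: XB)
    finally show ?thesis by (simp add: Xv_def[abs_def] I_def)
  qed
  have Q: "distr M (lborelk k) V = density (lborelk k) (\<lambda>v. ennreal (f v))"
    using distributed_distr_eq_density[OF Vd] .
  have XV: "distr M (lborelk k) Xv \<Otimes>\<^sub>M distr M (lborelk k) V
      = distr M (lborelk k \<Otimes>\<^sub>M lborelk k) (\<lambda>\<omega>. (Xv \<omega>, V \<omega>))"
    using indXV indep_var_distribution_eq unfolding Xv_def I_def by blast
  have \<Phi>m[measurable]: "\<Phi> \<in> measurable (lborelk k \<Otimes>\<^sub>M lborelk k) (lborelk k)"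
    unfolding \<Phi>_def I_def by measurable
  have pairm[measurable]: "(\<lambda>\<omega>. (Xv \<omega>, V \<omega>)) \<in> measurable M (lborelk k \<Otimes>\<^sub>M lborelk k)"
    by measurable
  have UU: "distr M (lborelk k) U = distr (distr M (lborelk k) Xv \<Otimes>\<^sub>M distr M (lborelk k) V) (lborelk k) \<Phi>"
    unfolding XV by (subst distr_distr[OF \<Phi>m pairm]) (auto intro!: distr_cong simp: U_def \<Phi>_def Xv_def)
  have Ug: "distr M (lborelk k) U = density (lborelk k) (\<lambda>u. ennreal (g u))"
    using distributed_distr_eq_density[OF Ud] by (simp add: U_def[abs_def] I_def)
  have LK: "PiM I (\<lambda>_. lborel) = lborelk k" by (simp add: I_def)
  have Lpsf: "product_sigma_finite (\<lambda>_. lborel :: real measure)"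
    by (rule product_sigma_finite.intro) (rule sigma_finite_lborel)
  have sfL: "sigma_finite_measure (lborelk k)"
    using product_sigma_finite.sigma_finite[OF Lpsf, of "{..<k}"] by simp
  have bm[measurable]: "b j \<in> borel_measurable borel" for j unfolding b_def by measurable
  have sBm: "sets (PiM I Bm) = sets (lborelk k)"
    unfolding LK[symmetric] by (rule sets_PiM_cong) (auto simp: Bm_def)
  define Kp where "Kp v u = (\<Prod>j\<in>I. ennreal (Kf (\<zeta> j) (\<alpha> j) (v j) (u j)))" for v u :: "nat \<Rightarrow> real"
  have Kpm[measurable]: "(\<lambda>u. Kp v u) \<in> borel_measurable (lborelk k)" for v
    unfolding Kp_def I_def by measurable
  have Kpm'[measurable]: "(\<lambda>v. Kp v u) \<in> borel_measurable (lborelk k)" for u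
    unfolding Kp_def I_def by measurable
  have Kpm2[measurable]: "(\<lambda>p. Kp (snd p) (fst p)) \<in> borel_measurable (lborelk k \<Otimes>\<^sub>M lborelk k)"
    unfolding Kp_def I_def by measurable
  have inner: "(\<integral>\<^sup>+ x. indicator A (\<Phi> (x, v)) \<partial>PiM I Bm) = (\<integral>\<^sup>+ u. Kp v u * indicator A u \<partial>lborelk k)"
    if A[measurable]: "A \<in> sets (lborelk k)" and vpos: "\<And>j. j \<in> I \<Longrightarrow> v j > 0" for A v
  proof -
    define T where "T x = (\<lambda>j\<in>I. v j / x j)" for x :: "nat \<Rightarrow> real"
    have D: "distr (PiM I Bm) (lborelk k) T = PiM I (\<lambda>j. density lborel (\<lambda>t. ennreal (Kf (\<zeta> j) (\<alpha> j) (v j) t)))"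
      unfolding LK[symmetric] T_def Bm_def
    proof (rule distr_PiM_coord[OF I(1)])
      fix j assume j: "j \<in> I"
      then have "j < k" by (simp add: I_def)
      then show "distr (density lborel (\<lambda>t. ennreal (b j t))) lborel (\<lambda>t. v j / t) =
          density lborel (\<lambda>t. ennreal (Kf (\<zeta> j) (\<alpha> j) (v j) t))"
        unfolding b_def using distr_inv_beta[OF vpos[OF j] zpos apos] by blast
    qed auto
    have Tm: "T \<in> measurable (PiM I Bm) (lborelk k)"
      unfolding measurable_cong_sets[OF sBm refl] T_def LK[symmetric] by measurable
    have "(\<integral>\<^sup>+ x. indicator A (\<Phi> (x, v)) \<partial>PiM I Bm) = (\<integral>\<^sup>+ x. indicator A (T x) \<partial>PiM I Bm)"
      by (simp add: \<Phi>_def T_def)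
    also have "\<dots> = (\<integral>\<^sup>+ u. indicator A u \<partial>distr (PiM I Bm) (lborelk k) T)"
      by (rule nn_integral_distr[symmetric, OF Tm]) simp
    also have "\<dots> = emeasure (PiM I (\<lambda>j. density lborel (\<lambda>t. ennreal (Kf (\<zeta> j) (\<alpha> j) (v j) t)))) A"
    proof -
      have "sets (PiM I (\<lambda>j. density lborel (\<lambda>t. ennreal (Kf (\<zeta> j) (\<alpha> j) (v j) t)))) = sets (lborelk k)"
        unfolding LK[symmetric] by (rule sets_PiM_cong) auto
      then show ?thesis unfolding D using A by (intro nn_integral_indicator) simp
    qed
    also have "PiM I (\<lambda>j. density lborel (\<lambda>t. ennreal (Kf (\<zeta> j) (\<alpha> j) (v j) t)))
        = density (lborelk k) (Kp v)"
      unfolding LK[symmetric] Kp_def by (rule PiM_density_prod[symmetric, OF I(1)]) simp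
    also have "emeasure (density (lborelk k) (Kp v)) A = (\<integral>\<^sup>+ u. Kp v u * indicator A u \<partial>lborelk k)"
      by (rule emeasure_density[OF _ A]) simp
    finally show ?thesis .
  qed
  define G where "G u = (\<integral>\<^sup>+ v. ennreal (f v) * Kp v u \<partial>lborelk k)" for u
  have Gjm: "(\<lambda>(u, v). ennreal (f v) * Kp v u) \<in> borel_measurable (lborelk k \<Otimes>\<^sub>M lborelk k)"
    using Kpm2 by measurable
  have Gm[measurable]: "G \<in> borel_measurable (lborelk k)"
    unfolding G_def by (rule sigma_finite_measure.borel_measurable_nn_integral[OF sfL Gjm])
  have sfP: "sigma_finite_measure (distr M (lborelk k) Xv)"
    by (rule prob_space_imp_sigma_finite, rule prob_space_distr, rule Xvm)
  have sfQ: "sigma_finite_measure (distr M (lborelk k) V)"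
    by (rule prob_space_imp_sigma_finite, rule prob_space_distr, rule Vm)
  have psf: "pair_sigma_finite (distr M (lborelk k) Xv) (distr M (lborelk k) V)"
    unfolding pair_sigma_finite_def using sfP sfQ by auto
  have psL: "pair_sigma_finite (lborelk k) (lborelk k)" unfolding pair_sigma_finite_def using sfL by auto
  have eqA: "emeasure (density (lborelk k) (\<lambda>u. ennreal (g u))) A = emeasure (density (lborelk k) G) A"
    if A[measurable]: "A \<in> sets (lborelk k)" for A
  proof -
    let ?P = "distr M (lborelk k) Xv" and ?Q = "distr M (lborelk k) V"
    have sPQ: "sets (?P \<Otimes>\<^sub>M ?Q) = sets (lborelk k \<Otimes>\<^sub>M lborelk k)"
      by (rule sets_pair_measure_cong) simp_all
    have \<Phi>m': "\<Phi> \<in> measurable (?P \<Otimes>\<^sub>M ?Q) (lborelk k)"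
      using \<Phi>m unfolding measurable_cong_sets[OF sPQ refl] .
    have indm0: "(\<lambda>p. indicator A (\<Phi> p) :: ennreal) \<in> borel_measurable (lborelk k \<Otimes>\<^sub>M lborelk k)"
      by measurable
    have indm: "(\<lambda>p. indicator A (\<Phi> p) :: ennreal) \<in> borel_measurable (?P \<Otimes>\<^sub>M ?Q)"
      using indm0 unfolding measurable_cong_sets[OF sPQ refl] .
    have sLP: "sets (lborelk k \<Otimes>\<^sub>M ?P) = sets (lborelk k \<Otimes>\<^sub>M lborelk k)"
      by (rule sets_pair_measure_cong) simp_all
    have indm1: "(\<lambda>(v, x). indicator A (\<Phi> (x, v)) :: ennreal) \<in> borel_measurable (lborelk k \<Otimes>\<^sub>M lborelk k)"
      by measurable
    then have indm2: "(\<lambda>(v, x). indicator A (\<Phi> (x, v)) :: ennreal) \<in> borel_measurable (lborelk k \<Otimes>\<^sub>M ?P)"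
      unfolding measurable_cong_sets[OF sLP refl] .
    have innm: "(\<lambda>v. \<integral>\<^sup>+ x. indicator A (\<Phi> (x, v)) \<partial>?P) \<in> borel_measurable (lborelk k)"
      by (rule sigma_finite_measure.borel_measurable_nn_integral[OF sfP indm2])
    have "emeasure (density (lborelk k) (\<lambda>u. ennreal (g u))) A = emeasure (distr (?P \<Otimes>\<^sub>M ?Q) (lborelk k) \<Phi>) A"
      using Ug UU by simp
    also have "\<dots> = (\<integral>\<^sup>+ u. indicator A u \<partial>distr (?P \<Otimes>\<^sub>M ?Q) (lborelk k) \<Phi>)"
      by (rule nn_integral_indicator[symmetric]) simp
    also have "\<dots> = (\<integral>\<^sup>+ p. indicator A (\<Phi> p) \<partial>(?P \<Otimes>\<^sub>M ?Q))"
      by (rule nn_integral_distr[OF \<Phi>m']) simp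
    also have "\<dots> = (\<integral>\<^sup>+ v. (\<integral>\<^sup>+ x. indicator A (\<Phi> (x, v)) \<partial>?P) \<partial>?Q)"
      by (rule pair_sigma_finite.nn_integral_snd[OF psf indm, symmetric])
    also have "\<dots> = (\<integral>\<^sup>+ v. ennreal (f v) * (\<integral>\<^sup>+ x. indicator A (\<Phi> (x, v)) \<partial>?P) \<partial>lborelk k)"
      unfolding Q by (rule nn_integral_density[OF fm innm])
    also have "\<dots> = (\<integral>\<^sup>+ v. (\<integral>\<^sup>+ u. ennreal (f v) * Kp v u * indicator A u \<partial>lborelk k) \<partial>lborelk k)"
    proof (rule nn_integral_cong)
      fix v assume v: "v \<in> space (lborelk k)"
      show "ennreal (f v) * (\<integral>\<^sup>+ x. indicator A (\<Phi> (x, v)) \<partial>?P)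
          = (\<integral>\<^sup>+ u. ennreal (f v) * Kp v u * indicator A u \<partial>lborelk k)"
      proof (cases "\<forall>j\<in>I. v j > 0")
        case True
        have "ennreal (f v) * (\<integral>\<^sup>+ x. indicator A (\<Phi> (x, v)) \<partial>?P)
            = ennreal (f v) * (\<integral>\<^sup>+ u. Kp v u * indicator A u \<partial>lborelk k)"
          unfolding P using inner[OF A] True by simp
        also have "\<dots> = (\<integral>\<^sup>+ u. ennreal (f v) * (Kp v u * indicator A u) \<partial>lborelk k)"
          by (rule nn_integral_cmult[symmetric]) measurable
        finally show ?thesis by (simp add: mult.assoc)
      next
        case False
        then have "f v = 0" using f0[OF v] by (auto simp: I_def not_less)
        then show ?thesis by simp
      qed
    qed
    also have "\<dots> = (\<integral>\<^sup>+ u. (\<integral>\<^sup>+ v. ennreal (f v) * Kp v u * indicator A u \<partial>lborelk k) \<partial>lborelk k)"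
    proof (rule pair_sigma_finite.Fubini'[OF psL])
      show "(\<lambda>(u, v). ennreal (f v) * Kp v u * indicator A u) \<in> borel_measurable (lborelk k \<Otimes>\<^sub>M lborelk k)"
        using Kpm2 by measurable
    qed
    also have "\<dots> = (\<integral>\<^sup>+ u. G u * indicator A u \<partial>lborelk k)"
    proof (rule nn_integral_cong)
      fix u
      show "(\<integral>\<^sup>+ v. ennreal (f v) * Kp v u * indicator A u \<partial>lborelk k) = G u * indicator A u"
        unfolding G_def by (rule nn_integral_multc) measurable
    qed
    also have "\<dots> = emeasure (density (lborelk k) G) A"
      by (rule emeasure_density[symmetric]) simp_all
    finally show ?thesis .
  qed
  have "density (lborelk k) (\<lambda>u. ennreal (g u)) = density (lborelk k) G"
    by (rule measure_eqI) (simp_all add: eqA)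
  then have AEg: "AE u in lborelk k. ennreal (g u) = G u"
    by (rule sigma_finite_measure.density_unique[OF sfL gm Gm])
  show ?thesis
    using AEg AE_space[of "lborelk k"]
  proof eventually_elim
    case (elim u)
    note gG = elim(1) and uS = elim(2)
    show ?case
    proof
      assume "\<forall>j<k. u j > 0"
      then have upos: "\<And>j. j \<in> I \<Longrightarrow> u j > 0" by (auto simp: I_def)
      define c0 where "c0 = (\<Prod>j\<in>I. Gamma (\<zeta> j + \<alpha> j) / (Gamma (\<zeta> j) * Gamma (\<alpha> j)) * u j powr (- \<zeta> j - \<alpha> j))"
      define W where "W v = indicator (PiE I (\<lambda>j. {0..u j})) v * ((\<Prod>j\<in>I. (u j - v j) powr (\<alpha> j - 1) * v j powr \<zeta> j) * f v)" for v
      have c0pos: "c0 \<ge> 0" unfolding c0_def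
        by (intro prod_nonneg mult_nonneg_nonneg divide_nonneg_nonneg) (auto simp: I_def zpos apos less_imp_le intro!: Gamma_real_nonneg add_pos_pos)
      have Wnn: "W v \<ge> 0" for v unfolding W_def
        by (intro mult_nonneg_nonneg prod_nonneg fnn) auto
      have Wm[measurable]: "W \<in> borel_measurable (lborelk k)" unfolding W_def I_def by measurable
      have Kfnn: "Kf (\<zeta> j) (\<alpha> j) (v j) (u j) \<ge> 0" if "j \<in> I" for j v
        using Kf_nonneg zpos apos that by (auto simp: I_def)
      have "G u = (\<integral>\<^sup>+ v. ennreal (c0 * W v) \<partial>lborelk k)"
        unfolding G_def
      proof (rule nn_integral_cong)
        fix v assume v: "v \<in> space (lborelk k)"
        have "ennreal (f v) * Kp v u = ennreal (f v * (\<Prod>j\<in>I. Kf (\<zeta> j) (\<alpha> j) (v j) (u j)))"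
          unfolding Kp_def using Kfnn fnn by (simp add: prod_ennreal ennreal_mult prod_nonneg)
        also have "f v * (\<Prod>j\<in>I. Kf (\<zeta> j) (\<alpha> j) (v j) (u j)) = c0 * W v"
          unfolding c0_def W_def
        proof (rule Kprod_eq[OF I(1) _ upos])
          show "v \<in> extensional I" using v by (simp add: space_PiM PiE_iff I_def)
          show "\<exists>j\<in>I. v j \<le> 0 \<Longrightarrow> f v = 0" using f0[OF v] by (auto simp: I_def)
        qed
        finally show "ennreal (f v) * Kp v u = ennreal (c0 * W v)" .
      qed
      also have "\<dots> = (\<integral>\<^sup>+ v. ennreal c0 * ennreal (W v) \<partial>lborelk k)"
        by (intro nn_integral_cong) (simp add: ennreal_mult c0pos Wnn)
      also have "\<dots> = ennreal c0 * (\<integral>\<^sup>+ v. ennreal (W v) \<partial>lborelk k)"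
        by (rule nn_integral_cmult) measurable
      finally have Gu: "G u = ennreal c0 * (\<integral>\<^sup>+ v. ennreal (W v) \<partial>lborelk k)" .
      have gu: "g u = c0 * (LINT v | lborelk k. W v)"
      proof -
        have "g u = enn2real (ennreal (g u))" using gnn by simp
        also have "\<dots> = c0 * enn2real (\<integral>\<^sup>+ v. ennreal (W v) \<partial>lborelk k)"
          using gG Gu c0pos by (simp add: enn2real_mult)
        also have "enn2real (\<integral>\<^sup>+ v. ennreal (W v) \<partial>lborelk k) = (LINT v | lborelk k. W v)"
          by (rule integral_eq_nn_integral[symmetric]) (auto simp: Wnn)
        finally show ?thesis .
      qed
      have kb: "kober k \<zeta> \<alpha> f u = (\<Prod>j\<in>I. u j powr (- \<zeta> j - \<alpha> j) / Gamma (\<alpha> j)) * (LINT v | lborelk k. W v)"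
        unfolding kober_def set_lebesgue_integral_def W_def I_def by simp
      have cc: "(\<Prod>j\<in>I. Gamma (\<zeta> j) / Gamma (\<zeta> j + \<alpha> j)) * c0 = (\<Prod>j\<in>I. u j powr (- \<zeta> j - \<alpha> j) / Gamma (\<alpha> j))"
        unfolding c0_def prod.distrib[symmetric]
      proof (rule prod.cong[OF refl])
        fix j assume j: "j \<in> I"
        then have "Gamma (\<zeta> j) > 0" "Gamma (\<zeta> j + \<alpha> j) > 0"
          using zpos apos by (auto simp: I_def intro!: Gamma_real_pos add_pos_pos)
        then show "Gamma (\<zeta> j) / Gamma (\<zeta> j + \<alpha> j) *
            (Gamma (\<zeta> j + \<alpha> j) / (Gamma (\<zeta> j) * Gamma (\<alpha> j)) * u j powr (- \<zeta> j - \<alpha> j))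
          = u j powr (- \<zeta> j - \<alpha> j) / Gamma (\<alpha> j)"
          by (simp add: field_simps)
      qed
      show "(\<Prod>j<k. Gamma (\<zeta> j) / Gamma (\<zeta> j + \<alpha> j)) * g u = kober k \<zeta> \<alpha> f u"
        unfolding gu kb cc[symmetric] by (simp add: I_def mult.assoc)
    qed
  qed
qed

end
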